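(* Suppose $\|x_s\|_2\le L$ for all arms ever played and $\lambda>0$. Then at every communication round at time $t\le T$, for every client $i$ and every participant set $S$, the data incentive satisfies $$\mathcal I^d_{i,t}(S)\le \min\Big\{\big(1+\tfrac{L^2}{\lambda}\big)^{T},\ \big(1+\tfrac{TL^2}{\lambda d}\big)^{d}\Big\}.$$ Consequently, under the payment-free incentive mechanism, a client $i$ with $D_i^p>\min\{(1+L^2/\lambda)^T,(1+TL^2/(\lambda d))^d\}$ never participates in data sharing.
   Context: Federated linear bandit with $N$ clients and a server; at each time $t\le T$ one client plays an arm $x_t\in\mathbb R^d$ with $\|x_t\|_2\le L$. Client $i$ holds $V_{i,t}=\lambda I+\sum x_sx_s^\top$ over the data available to it; $\Delta V_{j,t}$ denotes client $j$'s local data (sum of $x_sx_s^\top$) not yet uploaded to the server, and $\Delta V_{-i,t}$ the data held by the server (uploaded by other clients) not yet sent to client $i$; all these sums are over distinct time steps $s\le t$, disjoint from those in $V_{i,t}$. For a participant set $S$, the data incentive is $\mathcal I^d_{i,t}(S)=\frac{\det(D_{i,t}(S)+V_{i,t})}{\det V_{i,t}}-1$ with $D_{i,t}(S)=\sum_{j\in S,\,j\ne i}\Delta V_{j,t}+\Delta V_{-i,t}$. Client $i$ participates only if its incentive is at least its data-sharing cost $D_i^p$. The payment-free mechanism offers only the data incentive: starting from all clients it repeatedly removes any client $i\in S$ with $\mathcal I^d_{i,t}(S)<D_i^p$ until stable. *)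

theory Defs
  imports "HOL-Analysis.Analysis"
begin

definition outer_prod :: "real^'d \<Rightarrow> real^'d \<Rightarrow> real^'d^'d" where
  "outer_prod u v = (\<chi> i j. u $ i * v $ j)"

definition gram :: "(nat \<Rightarrow> real^'d) \<Rightarrow> nat set \<Rightarrow> real^'d^'d" where
  "gram x A = (\<Sum>s\<in>A. outer_prod (x s) (x s))"

text \<open>Vs i t : time steps whose data client i holds at time t (V_{i,t} = lam I + gram);
  Us j t : time steps of client j's local data not yet uploaded (Delta V_{j,t});
  Ws i t : time steps held by the server not yet sent to client i (Delta V_{-i,t}).\<close>
definition data_incentive ::
  "real \<Rightarrow> (nat \<Rightarrow> real^'d) \<Rightarrow> (nat \<Rightarrow> nat \<Rightarrow> nat set) \<Rightarrow> (nat \<Rightarrow> nat \<Rightarrow> nat set)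
    \<Rightarrow> (nat \<Rightarrow> nat \<Rightarrow> nat set) \<Rightarrow> nat \<Rightarrow> nat \<Rightarrow> nat set \<Rightarrow> real" where
  "data_incentive lam x Vs Us Ws t i S =
     (let V = lam *\<^sub>R mat 1 + gram x (Vs i t);
          D = (\<Sum>j\<in>S - {i}. gram x (Us j t)) + gram x (Ws i t)
      in det (D + V) / det V - 1)"

definition pf_step :: "(nat \<Rightarrow> nat set \<Rightarrow> real) \<Rightarrow> (nat \<Rightarrow> real) \<Rightarrow> nat set \<Rightarrow> nat set \<Rightarrow> bool" where
  "pf_step inc cost S S' \<longleftrightarrow> (\<exists>i\<in>S. inc i S < cost i \<and> S' = S - {i})"

definition pf_outcome :: "(nat \<Rightarrow> nat set \<Rightarrow> real) \<Rightarrow> (nat \<Rightarrow> real) \<Rightarrow> nat set \<Rightarrow> nat set \<Rightarrow> bool" where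
  "pf_outcome inc cost C S \<longleftrightarrow> (pf_step inc cost)\<^sup>*\<^sup>* C S \<and> \<not> (\<exists>S'. pf_step inc cost S S')"

end

theory Submission
  imports Defs
begin




lemma row_mat1: "row k (mat 1 :: real^'d^'d) = axis k 1"
  by (simp add: row_def mat_def axis_def vec_eq_iff)

lemma vec_as_span_gen:
  fixes z :: "real^'d" and A :: "real^'d^'d"
  assumes "z $ j = 0" and "\<And>l. l \<noteq> j \<Longrightarrow> row l A = axis l 1"
  shows "z \<in> vec.span {row l A |l. l \<noteq> j}"
proof -
  have "z = (\<Sum>l\<in>UNIV - {j}. z$l *s axis l 1)"
    using assms(1) by (auto simp: vec_eq_iff sum_component axis_def if_distrib cong: if_cong)
  moreover have "(\<Sum>l\<in>UNIV - {j}. z$l *s axis l 1) \<in> vec.span {row l A |l. l \<noteq> j}"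
    apply (intro vec.span_sum vec.span_scale vec.span_base)
    subgoal for l using assms(2)[of l] by (metis (mono_tags, lifting) DiffD2 insertI1 mem_Collect_eq)
    done
  ultimately show ?thesis by simp
qed

lemma det_E1:
  fixes y :: "real^'d"
  assumes "y $ j = 0"
  shows "det (\<chi> k l. (if k = l then 1 else 0) + (if l = j then y$k else 0) :: real^'d^'d) = 1"
proof -
  let ?E = "(\<chi> k l. (if k = l then 1 else 0) + (if l = j then y$k else 0) :: real^'d^'d)"
  have "transpose ?E = (\<chi> k. if k = j then row j (mat 1) + y else row k (mat 1))"
    unfolding transpose_def row_def mat_def
    by (rule iffD2[OF vec_eq_iff], rule allI, rule iffD2[OF vec_eq_iff], rule allI) simp
  moreover have "det (\<chi> k. if k = j then row j (mat 1) + y else row k (mat 1) :: real^'d^'d) = det (mat 1 :: real^'d^'d)"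
    by (rule det_row_span, rule vec_as_span_gen) (use assms in \<open>simp_all add: row_mat1\<close>)
  ultimately have "det (transpose ?E) = 1" by simp
  then show ?thesis by simp
qed

lemma det_H1:
  fixes x :: "real^'d"
  shows "det (\<chi> k. if k = j then x else axis k 1 :: real^'d^'d) = x $ j"
proof -
  define A0 :: "real^'d^'d" where "A0 = (\<chi> k l. if k = l then (if k = j then x$j else 1) else 0)"
  have rowA0: "l \<noteq> j \<Longrightarrow> row l A0 = axis l 1" for l
    unfolding A0_def row_def axis_def
    by (rule iffD2[OF vec_eq_iff], rule allI) simp
  have eq: "(\<chi> k. if k = j then x else axis k 1 :: real^'d^'d)
      = (\<chi> k. if k = j then row j A0 + (x - x$j *s axis j 1) else row k A0)"
    unfolding A0_def row_def axis_def
    by (rule iffD2[OF vec_eq_iff], rule allI, rule iffD2[OF vec_eq_iff], rule allI) auto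
  have "det (\<chi> k. if k = j then row j A0 + (x - x$j *s axis j 1) else row k A0) = det A0"
    by (rule det_row_span, rule vec_as_span_gen) (use rowA0 in \<open>auto simp: axis_def\<close>)
  also have "det A0 = (\<Prod>i\<in>UNIV. if i = j then x$j else 1)"
    by (subst det_diagonal) (auto simp: A0_def)
  also have "\<dots> = x$j"
    by (subst prod.If_cases) auto
  finally show ?thesis using eq by simp
qed

lemma rows_eta: "(\<chi> i. row i A) = (A :: real^'d^'d)"
  unfolding row_def
  by (rule iffD2[OF vec_eq_iff], rule allI, rule iffD2[OF vec_eq_iff], rule allI) simp

lemma inner_split:
  fixes x y :: "real^'d"
  shows "x \<bullet> y = x \<bullet> (\<chi> k. if k = j then 0 else y$k) + x$j * y$j"
proof -
  have "x \<bullet> y = (\<Sum>i\<in>UNIV. x$i * (\<chi> k. if k = j then 0 else y$k)$i + (if i = j then x$i * y$i else 0))"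
    unfolding inner_vec_def by (rule sum.cong) auto
  also have "\<dots> = x \<bullet> (\<chi> k. if k = j then 0 else y$k) + x$j * y$j"
    unfolding inner_vec_def sum.distrib by simp
  finally show ?thesis .
qed

lemma sum_delta2:
  fixes f :: "'d::finite \<Rightarrow> real"
  shows "(\<Sum>l\<in>UNIV. ((if k = l then 1 else 0) + (if l = j then c else 0)) * f l) = f k + c * f j"
proof -
  have "(\<Sum>l\<in>UNIV. ((if k = l then 1 else 0) + (if l = j then c else 0)) * f l)
      = (\<Sum>l\<in>UNIV. (if k = l then f l else 0) + (if l = j then c * f l else 0))"
    by (rule sum.cong) (auto simp: algebra_simps)
  also have "\<dots> = f k + c * f j" by (simp add: sum.distrib)
  finally show ?thesis .
qed

lemma det_rank1_supp:
  fixes x :: "real^'d"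
  assumes "finite P"
  shows "\<forall>y. (\<forall>k. k \<notin> P \<longrightarrow> y$k = 0) \<longrightarrow> det (mat 1 + outer_prod y x) = 1 + x \<bullet> y"
  using assms
proof (induction P rule: finite_induct)
  case empty
  show ?case
  proof (intro allI impI)
    fix y :: "real^'d" assume "\<forall>k. k \<notin> {} \<longrightarrow> y$k = 0"
    then have "y = 0" by (simp add: vec_eq_iff)
    then have "outer_prod y x = 0"
      unfolding outer_prod_def
      by (rule_tac iffD2[OF vec_eq_iff], rule_tac allI, rule_tac iffD2[OF vec_eq_iff], rule_tac allI) simp
    then show "det (mat 1 + outer_prod y x) = 1 + x \<bullet> y" using \<open>y = 0\<close> by simp
  qed
next
  case (insert j P)
  show ?case
  proof (intro allI impI)
    fix y :: "real^'d" assume supp: "\<forall>k. k \<notin> insert j P \<longrightarrow> y$k = 0"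
    define y' :: "real^'d" where "y' = (\<chi> k. if k = j then 0 else y$k)"
    have y'j: "y' $ j = 0" by (simp add: y'_def)
    have "\<forall>k. k \<notin> P \<longrightarrow> y'$k = 0" using supp by (simp add: y'_def)
    with insert.IH have IH: "det (mat 1 + outer_prod y' x) = 1 + x \<bullet> y'" by blast
    define N' where "N' = mat 1 + outer_prod y' x"
    define H where "H = (\<chi> i. if i = j then x else row i N')"
    define E :: "real^'d^'d" where "E = (\<chi> k l. (if k = l then 1 else 0) + (if l = j then y'$k else 0))"
    define H' :: "real^'d^'d" where "H' = (\<chi> k. if k = j then x else axis k 1)"
    have EH: "(E ** H')$k$m = H'$k$m + y'$k * H'$j$m" for k m
      unfolding matrix_matrix_mult_def E_def by (simp add: sum_delta2)
    have "H = E ** H'"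
      apply (rule iffD2[OF vec_eq_iff], rule allI, rule iffD2[OF vec_eq_iff], rule allI)
      subgoal for k m
        unfolding EH by (cases "k = j") (simp_all add: H_def H'_def N'_def row_def y'j axis_def mat_def outer_prod_def)
      done
    then have detH: "det H = x $ j"
      using det_E1[OF y'j] det_H1[of j x] by (simp add: det_mul E_def H'_def)
    have e1: "mat 1 + outer_prod y x = (\<chi> i. if i = j then row i N' + y$j *s x else row i N')"
      unfolding N'_def row_def y'_def outer_prod_def mat_def
      apply (rule iffD2[OF vec_eq_iff], rule allI, rule iffD2[OF vec_eq_iff], rule allI)
      apply (simp add: algebra_simps)
      done
    have "det (mat 1 + outer_prod y x) = det (\<chi> i. if i = j then row i N' else row i N') +
        det (\<chi> i. if i = j then y$j *s x else row i N')"
      unfolding e1 by (rule det_row_add)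
    also have "\<dots> = det N' + y$j * det H"
      unfolding H_def det_row_mul[of j "y$j" "\<lambda>k. x" "\<lambda>k. row k N'", simplified] 
      by (simp add: rows_eta)
    also have "\<dots> = 1 + x \<bullet> y"
      using IH detH inner_split[of x y j] by (simp add: N'_def y'_def)
    finally show "det (mat 1 + outer_prod y x) = 1 + x \<bullet> y" .
  qed
qed

lemma det_rank1:
  fixes x y :: "real^'d"
  shows "det (mat 1 + outer_prod y x) = 1 + x \<bullet> y"
  using det_rank1_supp[of "UNIV :: 'd set" x] by simp




lemma outer_mv: "outer_prod u w *v v = (w \<bullet> v) *s (u :: real^'d)"
  unfolding outer_prod_def matrix_vector_mult_def inner_vec_def
  by (rule iffD2[OF vec_eq_iff], rule allI) (simp add: sum_distrib_left algebra_simps)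

lemma gram_mv:
  assumes "finite A"
  shows "gram x A *v v = (\<Sum>s\<in>A. (x s \<bullet> v) *s x s)"
  using assms
proof (induction A rule: finite_induct)
  case empty then show ?case by (simp add: gram_def)
next
  case (insert a A)
  then show ?case by (simp add: gram_def matrix_vector_mult_add_rdistrib outer_mv)
qed

lemma gram_entry: "gram x A $ i $ j = (\<Sum>s\<in>A. x s $ i * x s $ j)"
  unfolding gram_def outer_prod_def by (simp add: sum_component)

lemma gram_insert: "finite A \<Longrightarrow> a \<notin> A \<Longrightarrow> gram x (insert a A) = outer_prod (x a) (x a) + gram x A"
  unfolding gram_def by simp

lemma scal_id_mv: "(lam *\<^sub>R mat 1 :: real^'d^'d) *v v = lam *\<^sub>R v"
  using scaleR_matrix_vector_assoc[of lam "mat 1 :: real^'d^'d" v] by simp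

lemma qf_M:
  assumes "finite B"
  shows "v \<bullet> ((lam *\<^sub>R mat 1 + gram x B) *v v) = lam * (v \<bullet> v) + (\<Sum>s\<in>B. (x s \<bullet> v)^2)"
proof -
  have "(lam *\<^sub>R mat 1 + gram x B) *v v = lam *\<^sub>R v + (\<Sum>s\<in>B. (x s \<bullet> v) *s x s)"
    by (simp add: matrix_vector_mult_add_rdistrib scal_id_mv gram_mv[OF assms])
  then show ?thesis
    by (simp add: inner_add_right inner_sum_right power2_eq_square inner_commute scalar_mult_eq_scaleR)
qed

lemma qf_M_ge:
  assumes "finite B"
  shows "lam * (v \<bullet> v) \<le> v \<bullet> ((lam *\<^sub>R mat 1 + gram x B) *v v)"
  unfolding qf_M[OF assms] by (simp add: sum_nonneg)

lemma mat_mul_outer: "M ** outer_prod u w = outer_prod (M *v u) (w :: real^'d)"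
  unfolding outer_prod_def matrix_matrix_mult_def matrix_vector_mult_def
  by (rule iffD2[OF vec_eq_iff], rule allI, rule iffD2[OF vec_eq_iff], rule allI) (simp add: sum_distrib_right mult.assoc)

lemma rank1_update:
  fixes M :: "real^'d^'d"
  assumes "det M \<noteq> 0"
  shows "\<exists>y. M *v y = z \<and> det (M + outer_prod z z) = det M * (1 + z \<bullet> y)"
proof -
  from assms have "invertible M" by (simp add: invertible_det_nz)
  then obtain B where MB: "M ** B = mat 1" unfolding invertible_def by blast
  define y where "y = B *v z"
  have My: "M *v y = z" unfolding y_def matrix_vector_mul_assoc MB by simp
  have "M + outer_prod z z = M ** (mat 1 + outer_prod y z)"
    by (simp add: matrix_add_ldistrib mat_mul_outer My)
  then have "det (M + outer_prod z z) = det M * (1 + z \<bullet> y)"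
    by (simp add: det_mul det_rank1)
  with My show ?thesis by blast
qed

lemma update_step:
  fixes M :: "real^'d^'d"
  assumes lam: "lam > 0" and dM: "det M > 0" and qf: "\<And>v. lam * (v \<bullet> v) \<le> v \<bullet> (M *v v)"
  shows "det M \<le> det (M + outer_prod z z) \<and> det (M + outer_prod z z) \<le> det M * (1 + (norm z)^2 / lam)"
proof -
  obtain y where My: "M *v y = z" and dz: "det (M + outer_prod z z) = det M * (1 + z \<bullet> y)"
    using rank1_update[of M z] dM by auto
  have q: "lam * (y \<bullet> y) \<le> z \<bullet> y" using qf[of y] My by (simp add: inner_commute)
  have yy: "0 \<le> y \<bullet> y" by simp
  have q0: "0 \<le> z \<bullet> y" using q yy lam by (smt (verit) mult_nonneg_nonneg)
  have cs: "z \<bullet> y \<le> norm z * norm y" by (rule Cauchy_Schwarz_ineq2[THEN order_trans[OF abs_ge_self]])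
  have ny: "y \<bullet> y = (norm y)^2" by (simp add: power2_norm_eq_inner)
  have "z \<bullet> y \<le> (norm z)^2 / lam"
  proof (cases "norm y = 0")
    case True then show ?thesis using cs lam by simp
  next
    case False
    then have npos: "norm y > 0" by simp
    have "lam * (norm y)^2 \<le> norm z * norm y" using q cs ny by simp
    then have "lam * norm y \<le> norm z" using npos by (simp add: power2_eq_square mult.assoc[symmetric])
    then have "norm y \<le> norm z / lam" using lam by (simp add: field_simps)
    then have "norm z * norm y \<le> norm z * (norm z / lam)" by (rule mult_left_mono) simp_all
    moreover have "norm z * (norm z / lam) = (norm z)^2 / lam" by (simp add: power2_eq_square)
    ultimately show ?thesis using cs by linarith
  qed
  then show ?thesis using dz dM q0 by (simp add: mult_left_mono)
qed




lemma det_lamI: "det (lam *\<^sub>R mat 1 :: real^'d^'d) = lam ^ CARD('d)"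
proof -
  have "det (lam *\<^sub>R mat 1 :: real^'d^'d) = (\<Prod>i\<in>UNIV. (lam *\<^sub>R mat 1 :: real^'d^'d) $ i $ i)"
    by (rule det_diagonal) (simp add: mat_def)
  also have "\<dots> = lam ^ CARD('d)" by (simp add: mat_def)
  finally show ?thesis .
qed

lemma M_insert: "finite B \<Longrightarrow> a \<notin> B \<Longrightarrow>
   lam *\<^sub>R mat 1 + gram x (insert a B) = (lam *\<^sub>R mat 1 + gram x B) + outer_prod (x a) (x a)"
  by (simp add: gram_insert algebra_simps)

lemma det_M_ge:
  assumes "finite B" "lam > 0"
  shows "lam ^ CARD('d) \<le> det (lam *\<^sub>R mat 1 + gram x B :: real^'d^'d)"
  using assms(1)
proof (induction B rule: finite_induct)
  case empty then show ?case by (simp add: gram_def det_lamI)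
next
  case (insert a B)
  have pos: "0 < det (lam *\<^sub>R mat 1 + gram x B :: real^'d^'d)"
    using insert.IH assms(2) by (smt (verit) zero_less_power)
  have "det (lam *\<^sub>R mat 1 + gram x B :: real^'d^'d)
      \<le> det ((lam *\<^sub>R mat 1 + gram x B) + outer_prod (x a) (x a))"
    using update_step[OF assms(2) pos qf_M_ge[OF insert.hyps(1)]] by blast
  then show ?case unfolding M_insert[OF insert.hyps] using insert.IH by linarith
qed

lemma ratio1:
  assumes fB: "finite B" and fA: "finite A" and dis: "A \<inter> B = {}"
    and nb: "\<forall>s\<in>A. norm (x s) \<le> L" and lam: "lam > 0"
  shows "det (lam *\<^sub>R mat 1 + gram x (B \<union> A) :: real^'d^'d)
     \<le> det (lam *\<^sub>R mat 1 + gram x B :: real^'d^'d) * (1 + L^2/lam) ^ card A"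
  using fA dis nb
proof (induction A rule: finite_induct)
  case empty then show ?case by simp
next
  case (insert a A)
  let ?M = "lam *\<^sub>R mat 1 + gram x (B \<union> A) :: real^'d^'d"
  have fBA: "finite (B \<union> A)" using fB insert.hyps by simp
  have aBA: "a \<notin> B \<union> A" using insert.hyps insert.prems by auto
  have pos: "0 < det ?M" using det_M_ge[OF fBA lam, of x] lam by (smt (verit) zero_less_power)
  have IH: "det ?M \<le> det (lam *\<^sub>R mat 1 + gram x B :: real^'d^'d) * (1 + L^2/lam) ^ card A"
    using insert.IH insert.prems by auto
  have st: "det (?M + outer_prod (x a) (x a)) \<le> det ?M * (1 + (norm (x a))^2 / lam)"
    using update_step[OF lam pos qf_M_ge[OF fBA]] by blast
  have na: "norm (x a) \<le> L" using insert.prems by auto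
  have "(norm (x a))^2 \<le> L^2" by (rule power_mono[OF na]) simp
  then have "(norm (x a))^2 / lam \<le> L^2 / lam" using lam by (simp add: divide_right_mono)
  then have "det ?M * (1 + (norm (x a))^2 / lam) \<le> det ?M * (1 + L^2/lam)"
    using pos by (intro mult_left_mono) auto
  also have "\<dots> \<le> det (lam *\<^sub>R mat 1 + gram x B :: real^'d^'d) * (1 + L^2/lam) ^ card A * (1 + L^2/lam)"
    using IH lam by (intro mult_right_mono) auto
  finally have ch: "det ?M * (1 + (norm (x a))^2 / lam) \<le> det (lam *\<^sub>R mat 1 + gram x B :: real^'d^'d) * (1 + L^2/lam) ^ card A * (1 + L^2/lam)" .
  have eqp: "det (lam *\<^sub>R mat 1 + gram x B :: real^'d^'d) * (1 + L^2/lam) ^ card A * (1 + L^2/lam)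
     = det (lam *\<^sub>R mat 1 + gram x B :: real^'d^'d) * (1 + L^2/lam) ^ card (insert a A)"
    using insert.hyps by simp
  have "det (?M + outer_prod (x a) (x a)) \<le>
     det (lam *\<^sub>R mat 1 + gram x B :: real^'d^'d) * (1 + L^2/lam) ^ card (insert a A)"
    using st ch eqp by linarith
  moreover have "B \<union> insert a A = insert a (B \<union> A)" by auto
  ultimately show ?case using M_insert[OF fBA aBA, of lam x] by (simp only:)
qed




definition pdm :: "real^'d^'d \<Rightarrow> bool" where
  "pdm B \<longleftrightarrow> (\<forall>v. v \<noteq> 0 \<longrightarrow> 0 < v \<bullet> (B *v v))"

definition symm :: "real^'d^'d \<Rightarrow> bool" where
  "symm B \<longleftrightarrow> (\<forall>k m. B$k$m = B$m$k)"

lemma pdm_diag_pos: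
  assumes "pdm B" shows "0 < B$i$i"
proof -
  have "axis i (1::real) \<noteq> 0" by (simp add: axis_eq_0_iff)
  then have "0 < axis i 1 \<bullet> (B *v axis i 1)" using assms unfolding pdm_def by blast
  also have "axis i 1 \<bullet> (B *v axis i 1) = B$i$i"
    by (simp add: matrix_vector_mult_basis inner_axis' column_def)
  finally show ?thesis .
qed

lemma sum_delta2':
  fixes f :: "'d::finite \<Rightarrow> real"
  shows "(\<Sum>l\<in>UNIV. f l * ((if k = l then 1 else 0) + (if l = j then c else 0))) = f k + c * f j"
  using sum_delta2[of k j c f] by (simp add: mult.commute)

lemma elim_step:
  fixes B :: "real^'d^'d"
  assumes pd: "pdm B" and sy: "symm B"
  shows "\<exists>B'. det B' = det B \<and> pdm B' \<and> symm B' \<and> (\<forall>k. B'$k$k \<le> B$k$k)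
     \<and> (\<forall>m. m \<noteq> i \<longrightarrow> B'$i$m = 0)
     \<and> (\<forall>p. p \<noteq> i \<longrightarrow> (\<forall>m. m \<noteq> p \<longrightarrow> B$p$m = 0) \<longrightarrow> (\<forall>m. m \<noteq> p \<longrightarrow> B'$p$m = 0))"
proof -
  define c where "c = B$i$i"
  have c: "0 < c" unfolding c_def by (rule pdm_diag_pos[OF pd])
  define w :: "real^'d" where "w = (\<chi> k. if k = i then 0 else - (B$k$i / c))"
  have wi: "w$i = 0" by (simp add: w_def)
  define E :: "real^'d^'d" where "E = (\<chi> k l. (if k = l then 1 else 0) + (if l = i then w$k else 0))"
  define B' where "B' = E ** B ** transpose E"
  have dE: "det E = 1" unfolding E_def by (rule det_E1[OF wi])
  have dB': "det B' = det B" by (simp add: B'_def det_mul dE)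
  have EB: "(E ** B)$k$m = B$k$m + w$k * B$i$m" for k m
    unfolding matrix_matrix_mult_def E_def by (simp add: sum_delta2)
  have XE: "(X ** transpose E)$k$m = X$k$m + w$m * X$k$i" for X :: "real^'d^'d" and k m
    unfolding matrix_matrix_mult_def E_def transpose_def by (simp add: sum_delta2')
  have Bent: "B'$k$m = B$k$m + w$k * B$i$m + w$m * B$k$i + w$k * w$m * c" for k m
    unfolding B'_def XE EB c_def by (simp add: algebra_simps)
  have syB: "B$k$m = B$m$k" for k m using sy unfolding symm_def by blast
  have sym': "symm B'" unfolding symm_def
  proof (intro allI)
    fix k m show "B'$k$m = B'$m$k" unfolding Bent using syB[of k m] syB[of i m] syB[of k i]
      by (simp add: algebra_simps)
  qed
  have diag: "B'$k$k \<le> B$k$k" for k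
  proof (cases "k = i")
    case True then show ?thesis unfolding Bent by (simp add: wi)
  next
    case False
    then have wk: "w$k = - (B$k$i / c)" by (simp add: w_def)
    have "B'$k$k = B$k$k - (B$k$i)^2 / c"
      unfolding Bent wk using syB[of i k] c by (simp add: field_simps power2_eq_square)
    moreover have "0 \<le> (B$k$i)^2 / c" using c by simp
    ultimately show ?thesis by linarith
  qed
  have rowi: "B'$i$m = 0" if "m \<noteq> i" for m
  proof -
    have wm: "w$m = - (B$m$i / c)" using that by (simp add: w_def)
    show ?thesis unfolding Bent wm wi using syB[of i m] c by (simp add: field_simps c_def)
  qed
  have pres: "B'$p$m = 0" if "p \<noteq> i" "\<forall>m. m \<noteq> p \<longrightarrow> B$p$m = 0" "m \<noteq> p" for p m
  proof -
    have "B$p$i = 0" using that by auto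
    then have "w$p = 0" by (simp add: w_def)
    then show ?thesis unfolding Bent using that \<open>B$p$i = 0\<close> by simp
  qed
  have pd': "pdm B'" unfolding pdm_def
  proof (intro allI impI)
    fix v :: "real^'d" assume v: "v \<noteq> 0"
    define u where "u = transpose E *v v"
    have ucomp: "u$l = v$l + (if l = i then (\<Sum>k\<in>UNIV. w$k * v$k) else 0)" for l
    proof -
      have "u$l = (\<Sum>k\<in>UNIV. v$k * ((if k = l then 1 else 0) + (if l = i then w$k else 0)))"
        unfolding u_def matrix_vector_mult_def transpose_def E_def by (simp add: mult.commute)
      also have "\<dots> = (\<Sum>k\<in>UNIV. (if k = l then v$k else 0) + (if l = i then w$k * v$k else 0))"
        by (rule sum.cong) (auto simp: algebra_simps)
      also have "\<dots> = v$l + (if l = i then (\<Sum>k\<in>UNIV. w$k * v$k) else 0)"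
        by (simp add: sum.distrib)
      finally show ?thesis .
    qed
    have "u \<noteq> 0"
    proof
      assume u0: "u = 0"
      have vl: "v$l = 0" if "l \<noteq> i" for l using ucomp[of l] u0 that by simp
      have "(\<Sum>k\<in>UNIV. w$k * v$k) = 0"
        by (rule sum.neutral) (use vl wi in \<open>metis mult_zero_left mult_zero_right\<close>)
      then have "v$i = 0" using ucomp[of i] u0 by simp
      with vl have "v = 0" by (metis vec_eq_iff zero_index)
      with v show False by simp
    qed
    then have "0 < u \<bullet> (B *v u)" using pd unfolding pdm_def by blast
    also have "u \<bullet> (B *v u) = v \<bullet> (B' *v v)"
    proof -
      have "B' *v v = E *v (B *v u)" unfolding B'_def u_def by (simp only: matrix_vector_mul_assoc matrix_mul_assoc)
      then have "v \<bullet> (B' *v v) = (v v* E) \<bullet> (B *v u)" by (simp add: dot_lmul_matrix)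
      also have "v v* E = u" unfolding u_def by simp
      finally show ?thesis by simp
    qed
    finally show "0 < v \<bullet> (B' *v v)" .
  qed
  show ?thesis
    apply (rule exI[of _ B'])
    using dB' pd' sym' diag rowi pres by blast
qed




lemma elim_all:
  fixes B :: "real^'d^'d"
  assumes "finite P" "pdm B" "symm B"
  shows "\<exists>B'. det B' = det B \<and> pdm B' \<and> symm B' \<and> (\<forall>k. B'$k$k \<le> B$k$k)
     \<and> (\<forall>p\<in>P. \<forall>m. m \<noteq> p \<longrightarrow> B'$p$m = 0)"
  using assms(1)
proof (induction P rule: finite_induct)
  case empty then show ?case using assms by blast
next
  case (insert i P)
  obtain B1 where B1: "det B1 = det B" "pdm B1" "symm B1" "\<forall>k. B1$k$k \<le> B$k$k"
      "\<forall>p\<in>P. \<forall>m. m \<noteq> p \<longrightarrow> B1$p$m = 0"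
    using insert.IH by (elim exE conjE) (rule that; assumption)
  obtain B2 where B2: "det B2 = det B1" "pdm B2" "symm B2" "\<forall>k. B2$k$k \<le> B1$k$k"
     "\<forall>m. m \<noteq> i \<longrightarrow> B2$i$m = 0"
     "\<forall>p. p \<noteq> i \<longrightarrow> (\<forall>m. m \<noteq> p \<longrightarrow> B1$p$m = 0) \<longrightarrow> (\<forall>m. m \<noteq> p \<longrightarrow> B2$p$m = 0)"
    using elim_step[OF B1(2,3), of i] by (elim exE conjE) (rule that; assumption)
  have C1: "\<forall>p\<in>insert i P. \<forall>m. m \<noteq> p \<longrightarrow> B2$p$m = 0"
  proof (intro ballI allI impI)
    fix p m assume p: "p \<in> insert i P" and m: "m \<noteq> p"
    show "B2$p$m = 0"
    proof (cases "p = i")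
      case True then show ?thesis using B2(5) m by simp
    next
      case False
      then have "p \<in> P" using p by simp
      then have "\<forall>m. m \<noteq> p \<longrightarrow> B1$p$m = 0" using B1(5) by simp
      then show ?thesis using B2(6) False m by simp
    qed
  qed
  have C2: "\<forall>k. B2$k$k \<le> B$k$k"
  proof
    fix k show "B2$k$k \<le> B$k$k" using B1(4) B2(4) order_trans by blast
  qed
  have dd: "det B2 = det B" using B2(1) B1(1) by simp
  show ?case
    by (intro exI[of _ B2] conjI) (rule dd B2(2) B2(3) C2 C1)+
qed

lemma hadamard:
  fixes A :: "real^'d^'d"
  assumes "pdm A" "symm A"
  shows "det A \<le> (\<Prod>k\<in>UNIV. A$k$k)"
proof -
  have "\<exists>B'. det B' = det A \<and> pdm B' \<and> symm B' \<and> (\<forall>k. B'$k$k \<le> A$k$k)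
     \<and> (\<forall>p\<in>UNIV. \<forall>m. m \<noteq> p \<longrightarrow> B'$p$m = 0)"
    by (rule elim_all[OF _ assms]) simp
  then obtain B where B: "det B = det A" "pdm B" "\<forall>k. B$k$k \<le> A$k$k"
     "\<forall>p\<in>UNIV. \<forall>m. m \<noteq> p \<longrightarrow> B$p$m = 0"
    by (elim exE conjE) (rule that; assumption)
  have "det B = (\<Prod>k\<in>UNIV. B$k$k)"
  proof (rule det_diagonal)
    fix i j :: 'd assume "i \<noteq> j" then show "B$i$j = 0" using B(4) by simp
  qed
  also have "\<dots> \<le> (\<Prod>k\<in>UNIV. A$k$k)"
  proof (rule prod_mono)
    fix k :: 'd assume "k \<in> UNIV"
    have "0 < B$k$k" by (rule pdm_diag_pos[OF B(2)])
    then show "0 \<le> B$k$k \<and> B$k$k \<le> A$k$k" using B(3) by simp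
  qed
  finally show ?thesis using B(1) by simp
qed

lemma amgm:
  fixes a :: "'d::finite \<Rightarrow> real"
  assumes "\<And>k. 0 < a k"
  shows "(\<Prod>k\<in>UNIV. a k) \<le> ((\<Sum>k\<in>UNIV. a k) / CARD('d)) ^ CARD('d)"
proof -
  let ?n = "CARD('d)"
  let ?p = "\<Prod>k\<in>UNIV. a k"
  have pp: "0 < ?p" using assms by (simp add: prod_pos)
  have n0: "0 < ?n" by simp
  have ppos: "0 < ?p powr (1 / ?n)" using pp by (simp only: powr_gt_zero)
  have "?p powr (1 / ?n) \<le> (\<Sum>k\<in>UNIV. a k / ?n)"
    using arith_geom_mean[of "UNIV :: 'd set" a] assms by (simp add: less_imp_le)
  also have "\<dots> = (\<Sum>k\<in>UNIV. a k) / ?n" by (simp add: sum_divide_distrib)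
  finally have le: "?p powr (1 / ?n) \<le> (\<Sum>k\<in>UNIV. a k) / ?n" .
  have "(?p powr (1 / ?n)) ^ ?n \<le> ((\<Sum>k\<in>UNIV. a k) / ?n) ^ ?n"
    by (rule power_mono[OF le]) simp
  moreover have "(?p powr (1 / ?n)) ^ ?n = ?p"
  proof -
    have "(?p powr (1 / ?n)) ^ ?n = (?p powr (1 / ?n)) powr (real ?n)"
      by (rule powr_realpow[symmetric]) (rule ppos)
    also have "\<dots> = ?p powr (1 / ?n * ?n)" by (simp add: powr_powr)
    also have "\<dots> = ?p" using n0 pp by simp
    finally show ?thesis .
  qed
  ultimately show ?thesis by simp
qed

lemma M_entry: "(lam *\<^sub>R mat 1 + gram x C :: real^'d^'d) $ k $ m = (if k = m then lam else 0) + (\<Sum>s\<in>C. x s $ k * x s $ m)"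
  by (simp add: gram_entry mat_def)

lemma M_pdm: "finite C \<Longrightarrow> lam > 0 \<Longrightarrow> pdm (lam *\<^sub>R mat 1 + gram x C :: real^'d^'d)"
  unfolding pdm_def
proof (intro allI impI)
  fix v :: "real^'d" assume "finite C" "lam > 0" "v \<noteq> 0"
  then have "0 < lam * (v \<bullet> v)" by simp
  also have "\<dots> \<le> v \<bullet> ((lam *\<^sub>R mat 1 + gram x C) *v v)" by (rule qf_M_ge[OF \<open>finite C\<close>])
  finally show "0 < v \<bullet> ((lam *\<^sub>R mat 1 + gram x C) *v v)" .
qed

lemma M_symm: "symm (lam *\<^sub>R mat 1 + gram x C :: real^'d^'d)"
  unfolding symm_def M_entry
proof (intro allI)
  fix k m :: 'd
  have "(\<Sum>s\<in>C. x s $ k * x s $ m) = (\<Sum>s\<in>C. x s $ m * x s $ k)"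
    by (rule sum.cong) (rule refl, rule mult.commute)
  then show "(if k = m then lam else 0) + (\<Sum>s\<in>C. x s $ k * x s $ m) = (if m = k then lam else 0) + (\<Sum>s\<in>C. x s $ m * x s $ k)"
    by (simp add: eq_commute)
qed

lemma M_trace: fixes lam :: real shows "finite C \<Longrightarrow> (\<Sum>k\<in>UNIV. (lam *\<^sub>R mat 1 + gram x C :: real^'d^'d) $ k $ k)
    = CARD('d) * lam + (\<Sum>s\<in>C. (norm (x s))^2)"
proof -
  assume fC: "finite C"
  have a: "(\<Sum>k\<in>UNIV. (lam *\<^sub>R mat 1 + gram x C :: real^'d^'d) $ k $ k)
     = (\<Sum>k\<in>(UNIV::'d set). lam + (\<Sum>s\<in>C. x s $ k * x s $ k))"
    unfolding M_entry by simp
  have b: "(\<Sum>k\<in>(UNIV::'d set). lam + (\<Sum>s\<in>C. x s $ k * x s $ k)) = CARD('d) * lam + (\<Sum>k\<in>(UNIV::'d set). \<Sum>s\<in>C. x s $ k * x s $ k)"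
    by (simp add: sum.distrib)
  have c: "(\<Sum>k\<in>(UNIV::'d set). \<Sum>s\<in>C. x s $ k * x s $ k) = (\<Sum>s\<in>C. (norm (x s))^2)"
    by (subst sum.swap) (simp add: power2_norm_eq_inner inner_vec_def)
  show ?thesis using a b c by simp
qed



lemma det_M_trace:
  assumes "finite C" "lam > 0"
  shows "det (lam *\<^sub>R mat 1 + gram x C :: real^'d^'d) \<le> (lam + (\<Sum>s\<in>C. (norm (x s))^2) / CARD('d)) ^ CARD('d)"
proof -
  let ?M = "lam *\<^sub>R mat 1 + gram x C :: real^'d^'d"
  have h1: "det ?M \<le> (\<Prod>k\<in>UNIV. ?M $ k $ k)" by (rule hadamard[OF M_pdm[OF assms] M_symm])
  have h2: "(\<Prod>k\<in>UNIV. ?M $ k $ k) \<le> ((\<Sum>k\<in>UNIV. ?M $ k $ k) / CARD('d)) ^ CARD('d)"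
    by (rule amgm) (rule pdm_diag_pos[OF M_pdm[OF assms]])
  have tr: "(\<Sum>k\<in>UNIV. ?M $ k $ k) = CARD('d) * lam + (\<Sum>s\<in>C. (norm (x s))^2)"
    by (rule M_trace[OF assms(1)])
  have cp: "real CARD('d) > 0" by simp
  have h3: "(CARD('d) * lam + (\<Sum>s\<in>C. (norm (x s))^2)) / CARD('d) = lam + (\<Sum>s\<in>C. (norm (x s))^2) / CARD('d)"
    using cp by (simp add: field_simps)
  show ?thesis using h1 h2 unfolding tr h3 by (rule order_trans)
qed




lemma core:
  fixes x :: "nat \<Rightarrow> real^'d"
  assumes lam: "lam > 0" and fB: "finite B" and fA: "finite A" and dis: "A \<inter> B = {}"
    and nb: "\<forall>s\<in>B \<union> A. norm (x s) \<le> L" and cardT: "card (B \<union> A) \<le> T"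
  shows "det (lam *\<^sub>R mat 1 + gram x (B \<union> A)) / det (lam *\<^sub>R mat 1 + gram x B) \<le> (1 + L\<^sup>2 / lam) ^ T
    \<and> det (lam *\<^sub>R mat 1 + gram x (B \<union> A)) / det (lam *\<^sub>R mat 1 + gram x B)
        \<le> (1 + real T * L\<^sup>2 / (lam * real CARD('d))) ^ CARD('d)"
proof -
  let ?V = "lam *\<^sub>R mat 1 + gram x B :: real^'d^'d"
  let ?W = "lam *\<^sub>R mat 1 + gram x (B \<union> A) :: real^'d^'d"
  have dV: "lam ^ CARD('d) \<le> det ?V" by (rule det_M_ge[OF fB lam])
  have lp: "0 < lam ^ CARD('d)" using lam by simp
  have dVp: "0 < det ?V" using dV lp by linarith
  have cA: "card A \<le> T"
    using cardT card_mono[of "B \<union> A" A] fA fB by auto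
  have nbA: "\<forall>s\<in>A. norm (x s) \<le> L" using nb by auto
  have r1: "det ?W \<le> det ?V * (1 + L^2/lam) ^ card A" by (rule ratio1[OF fB fA dis nbA lam])
  have one: "1 \<le> 1 + L^2/lam" using lam by simp
  have "(1 + L^2/lam) ^ card A \<le> (1 + L^2/lam) ^ T" by (rule power_increasing[OF cA one])
  then have "det ?V * (1 + L^2/lam) ^ card A \<le> det ?V * (1 + L^2/lam) ^ T"
    using dVp by (intro mult_left_mono) auto
  with r1 have "det ?W \<le> det ?V * (1 + L^2/lam) ^ T" by linarith
  then have b1: "det ?W / det ?V \<le> (1 + L^2/lam) ^ T" using dVp by (simp add: divide_le_eq mult.commute)
  let ?S = "\<Sum>s\<in>B \<union> A. (norm (x s))^2"
  let ?d = "real CARD('d)"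
  have dpos: "0 < ?d" by simp
  have fBA: "finite (B \<union> A)" using fA fB by simp
  have dW: "det ?W \<le> (lam + ?S / ?d) ^ CARD('d)" by (rule det_M_trace[OF fBA lam])
  have S0: "0 \<le> ?S" by (simp add: sum_nonneg)
  have Sle: "?S \<le> real (card (B \<union> A)) * L^2"
  proof -
    have "\<forall>s\<in>B \<union> A. (norm (x s))^2 \<le> L^2"
      using nb by (auto intro: power_mono)
    then show ?thesis using sum_bounded_above[of "B \<union> A" "\<lambda>s. (norm (x s))^2" "L^2"] by simp
  qed
  also have "\<dots> \<le> real T * L^2" using cardT by (intro mult_right_mono) auto
  finally have ST: "?S \<le> real T * L^2" .
  have Wpos: "0 < det ?W" using det_M_ge[OF fBA lam, of x] lp by linarith
  have "det ?W / det ?V \<le> det ?W / lam ^ CARD('d)"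
    using Wpos dV lp by (intro divide_left_mono) auto
  also have "\<dots> \<le> (lam + ?S / ?d) ^ CARD('d) / lam ^ CARD('d)"
    using dW lp by (intro divide_right_mono) auto
  also have "\<dots> = ((lam + ?S / ?d) / lam) ^ CARD('d)" by (simp add: power_divide)
  also have "(lam + ?S / ?d) / lam = 1 + ?S / (lam * ?d)" using lam dpos by (simp add: field_simps)
  also have "(1 + ?S / (lam * ?d)) ^ CARD('d) \<le> (1 + real T * L\<^sup>2 / (lam * ?d)) ^ CARD('d)"
  proof (rule power_mono)
    have "?S / (lam * ?d) \<le> real T * L\<^sup>2 / (lam * ?d)"
      using ST lam dpos by (intro divide_right_mono) auto
    then show "1 + ?S / (lam * ?d) \<le> 1 + real T * L\<^sup>2 / (lam * ?d)" by simp
    show "0 \<le> 1 + ?S / (lam * ?d)" using S0 lam dpos by simp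
  qed
  finally have b2: "det ?W / det ?V \<le> (1 + real T * L\<^sup>2 / (lam * ?d)) ^ CARD('d)" .
  show ?thesis using b1 b2 by simp
qed




theorem mainTheorem2:
  fixes x :: "nat \<Rightarrow> real^'d"
    and lam L :: real and T N :: nat
    and Vs Us Ws :: "nat \<Rightarrow> nat \<Rightarrow> nat set"
    and Dp :: "nat \<Rightarrow> real"
  assumes lam_pos: "lam > 0"
    and norm_bound: "\<forall>s\<in>{1..T}. norm (x s) \<le> L"
    and V_range: "\<forall>t\<le>T. \<forall>i<N. Vs i t \<subseteq> {1..t}"
    and U_range: "\<forall>t\<le>T. \<forall>j<N. Us j t \<subseteq> {1..t}"
    and W_range: "\<forall>t\<le>T. \<forall>i<N. Ws i t \<subseteq> {1..t}"
    and U_disj: "\<forall>t\<le>T. \<forall>j<N. \<forall>k<N. j \<noteq> k \<longrightarrow> Us j t \<inter> Us k t = {}"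
    and UV_disj: "\<forall>t\<le>T. \<forall>i<N. \<forall>j<N. j \<noteq> i \<longrightarrow> Us j t \<inter> Vs i t = {}"
    and UW_disj: "\<forall>t\<le>T. \<forall>i<N. \<forall>j<N. j \<noteq> i \<longrightarrow> Us j t \<inter> Ws i t = {}"
    and WV_disj: "\<forall>t\<le>T. \<forall>i<N. Ws i t \<inter> Vs i t = {}"
  shows "(\<forall>t\<le>T. \<forall>i<N. \<forall>S\<subseteq>{..<N}.
            data_incentive lam x Vs Us Ws t i S
              \<le> min ((1 + L\<^sup>2 / lam) ^ T) ((1 + real T * L\<^sup>2 / (lam * real CARD('d))) ^ CARD('d)))
       \<and> (\<forall>t\<le>T. \<forall>i<N.
            Dp i > min ((1 + L\<^sup>2 / lam) ^ T) ((1 + real T * L\<^sup>2 / (lam * real CARD('d))) ^ CARD('d))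
            \<longrightarrow> (\<forall>S. pf_outcome (data_incentive lam x Vs Us Ws t) Dp {..<N} S \<longrightarrow> i \<notin> S))"
proof -
  let ?B1 = "(1 + L\<^sup>2 / lam) ^ T"
  let ?B2 = "(1 + real T * L\<^sup>2 / (lam * real CARD('d))) ^ CARD('d)"
  have P1: "data_incentive lam x Vs Us Ws t i S \<le> min ?B1 ?B2"
    if t: "t \<le> T" and i: "i < N" and S: "S \<subseteq> {..<N}" for t i S
  proof -
    define J where "J = S - {i}"
    define U where "U = (\<Union>j\<in>J. Us j t)"
    define A where "A = U \<union> Ws i t"
    define B where "B = Vs i t"
    have J: "J \<subseteq> {..<N}" "finite J" "i \<notin> J" using S unfolding J_def by (auto intro: finite_subset)
    have Usub: "Us j t \<subseteq> {1..t}" if "j \<in> J" for j using U_range t J(1) that by auto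
    have Wsub: "Ws i t \<subseteq> {1..t}" using W_range t i by auto
    have Bsub: "B \<subseteq> {1..t}" using V_range t i unfolding B_def by auto
    have Usub': "U \<subseteq> {1..t}" unfolding U_def using Usub by auto
    have Asub: "A \<subseteq> {1..t}" unfolding A_def using Usub' Wsub by auto
    have fU: "finite U" using Usub' finite_subset by blast
    have fW: "finite (Ws i t)" using Wsub finite_subset by blast
    have fA: "finite A" using Asub finite_subset by blast
    have fB: "finite B" using Bsub finite_subset by blast
    have sumU: "(\<Sum>j\<in>J. gram x (Us j t)) = gram x U"
    proof -
      have "gram x U = (\<Sum>j\<in>J. sum (\<lambda>s. outer_prod (x s) (x s)) (Us j t))"
        unfolding gram_def U_def
      proof (rule sum.UNION_disjoint)
        show "finite J" by (rule J(2))
        show "\<forall>j\<in>J. finite (Us j t)" using Usub finite_subset by blast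
        show "\<forall>a\<in>J. \<forall>b\<in>J. a \<noteq> b \<longrightarrow> Us a t \<inter> Us b t = {}" using U_disj t J(1) by blast
      qed
      then show ?thesis unfolding gram_def by simp
    qed
    have UW: "U \<inter> Ws i t = {}"
      unfolding U_def using UW_disj t i J by blast
    have gA: "gram x A = gram x U + gram x (Ws i t)"
      unfolding A_def gram_def by (rule sum.union_disjoint[OF fU fW UW])
    have AB: "A \<inter> B = {}"
    proof -
      have "U \<inter> B = {}" unfolding U_def B_def using UV_disj t i J by blast
      moreover have "Ws i t \<inter> B = {}" unfolding B_def using WV_disj t i by blast
      ultimately show ?thesis unfolding A_def by blast
    qed
    have gBA: "gram x (B \<union> A) = gram x B + gram x A"
      unfolding gram_def by (rule sum.union_disjoint[OF fB fA]) (use AB in blast)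
    have DV: "((\<Sum>j\<in>S - {i}. gram x (Us j t)) + gram x (Ws i t)) + (lam *\<^sub>R mat 1 + gram x (Vs i t))
        = lam *\<^sub>R mat 1 + gram x (B \<union> A)"
      unfolding gBA gA sumU[unfolded J_def] B_def[symmetric] by (simp add: algebra_simps)
    have inc: "data_incentive lam x Vs Us Ws t i S
        = det (lam *\<^sub>R mat 1 + gram x (B \<union> A)) / det (lam *\<^sub>R mat 1 + gram x B) - 1"
      unfolding data_incentive_def Let_def DV B_def by simp
    have BAsub: "B \<union> A \<subseteq> {1..t}" using Asub Bsub by auto
    have nb: "\<forall>s\<in>B \<union> A. norm (x s) \<le> L" using BAsub norm_bound t by auto
    have cT: "card (B \<union> A) \<le> T"
      using card_mono[OF _ BAsub] t by simp
    have c: "det (lam *\<^sub>R mat 1 + gram x (B \<union> A)) / det (lam *\<^sub>R mat 1 + gram x B) \<le> ?B1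
     \<and> det (lam *\<^sub>R mat 1 + gram x (B \<union> A)) / det (lam *\<^sub>R mat 1 + gram x B) \<le> ?B2"
      by (rule core[OF lam_pos fB fA AB nb cT])
    show ?thesis unfolding inc using c by simp
  qed
  have reach: "S' \<subseteq> S0" if "(pf_step inc c)\<^sup>*\<^sup>* S0 S'" for inc c and S0 S' :: "nat set"
    using that by (induction rule: rtranclp_induct) (auto simp: pf_step_def)
  have P2: "i \<notin> S"
    if t: "t \<le> T" and i: "i < N"
      and Dp: "Dp i > min ?B1 ?B2"
      and out: "pf_outcome (data_incentive lam x Vs Us Ws t) Dp {..<N} S" for t i S
  proof
    assume iS: "i \<in> S"
    have Ssub: "S \<subseteq> {..<N}" using out reach unfolding pf_outcome_def by blast
    have "data_incentive lam x Vs Us Ws t i S \<le> min ?B1 ?B2" by (rule P1[OF t i Ssub])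
    with Dp have "data_incentive lam x Vs Us Ws t i S < Dp i" by linarith
    then have "pf_step (data_incentive lam x Vs Us Ws t) Dp S (S - {i})"
      unfolding pf_step_def using iS by blast
    then show False using out unfolding pf_outcome_def by blast
  qed
  show ?thesis using P1 P2 by blast
qed



end
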